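(* For every integer $d\ge1$ there exists a $(d+1)$-colored tiling of $\mathbb{R}^d$ all of whose tiles have volume at most $1$ and whose minimal distance is at least $\dfrac{1}{1+2(d-1)\sqrt2}$. In particular, $d+1$ colors suffice for a colored tiling of $\mathbb{R}^d$ by bounded tiles with positive minimal distance.
   Context: A $k$-colored tiling of $\mathbb{R}^d$ is a locally finite collection of closed bounded connected tiles covering $\mathbb{R}^d$, distinct tiles intersecting only in their boundaries, each tile assigned one of $k$ colors. The minimal distance is the infimum of the Euclidean distances $|x-y|$ over $x\in T_i$, $y\in T_j$ with $i\neq j$ and $T_i,T_j$ of the same color. *)

theory Defs
  imports "HOL-Analysis.Analysis"
begin

definition colored_tiling ::
  "nat \<Rightarrow> ('a::euclidean_space) set set \<Rightarrow> ('a set \<Rightarrow> nat) \<Rightarrow> bool" where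
  "colored_tiling k \<T> col \<longleftrightarrow>
     (\<forall>T\<in>\<T>. closed T \<and> bounded T \<and> connected T) \<and>
     \<Union>\<T> = UNIV \<and>
     (\<forall>x. \<exists>e>0. finite {T\<in>\<T>. T \<inter> ball x e \<noteq> {}}) \<and>
     (\<forall>T\<in>\<T>. \<forall>T'\<in>\<T>. T \<noteq> T' \<longrightarrow> T \<inter> T' \<subseteq> frontier T \<inter> frontier T') \<and>
     (\<forall>T\<in>\<T>. col T < k)"

definition min_distance ::
  "('a::metric_space) set set \<Rightarrow> ('a set \<Rightarrow> nat) \<Rightarrow> ereal" where
  "min_distance \<T> col =
     (INF p \<in> {(x, y). \<exists>T\<in>\<T>. \<exists>T'\<in>\<T>. T \<noteq> T' \<and> col T = col T' \<and> x \<in> T \<and> y \<in> T'}.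
        ereal (dist (fst p) (snd p)))"

end

theory Submission imports Defs begin
lemma seq_bound:
  fixes S :: "nat \<Rightarrow> int" and d :: nat
  assumes Sd: "S d = 0"
    and rel: "\<And>k. k < d \<Longrightarrow> \<bar>real_of_int (S k) - (1 + 1/(real d + 1)) * real_of_int (S (Suc k))\<bar> \<le> 1"
    and k: "k \<le> d"
  shows "\<bar>S k\<bar> \<le> int (d - k)"
  using k
proof (induction k rule: inc_induct)
  case base
  then show ?case using Sd by simp
next
  case (step n)
  have ih: "\<bar>real_of_int (S (Suc n))\<bar> \<le> real (d - Suc n)" proof -
    have "real_of_int \<bar>S (Suc n)\<bar> \<le> real_of_int (int (d - Suc n))" using step.IH by (simp only: of_int_le_iff)
    thus ?thesis by simp
  qed
  have r: "\<bar>real_of_int (S n) - (1 + 1/(real d + 1)) * real_of_int (S (Suc n))\<bar> \<le> 1"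
    using rel step.hyps by auto
  have "\<bar>(1 + 1/(real d + 1)) * real_of_int (S (Suc n))\<bar> \<le> (1 + 1/(real d + 1)) * real (d - Suc n)"
  proof -
    have pos: "0 \<le> 1 + 1/(real d + 1)" by (simp add: pos_add_strict less_imp_le)
    have "\<bar>(1 + 1/(real d + 1)) * real_of_int (S (Suc n))\<bar> = (1 + 1/(real d + 1)) * \<bar>real_of_int (S (Suc n))\<bar>"
      using pos by (simp add: abs_mult)
    then show ?thesis using mult_left_mono[OF ih pos] by simp
  qed
  also have "\<dots> < real (d - n)"
  proof -
    have "real (d - Suc n) < real d + 1" by simp
    hence "real (d - Suc n) / (real d + 1) < 1" by simp
    moreover have "real (d - n) = real (d - Suc n) + 1" using step.hyps by simp
    moreover have "(1 + 1/(real d + 1)) * real (d - Suc n) = real (d - Suc n) + real (d - Suc n)/(real d + 1)"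
      by (simp add: distrib_right)
    ultimately show ?thesis by linarith
  qed
  finally have "\<bar>real_of_int (S n)\<bar> < real (d - n) + 1" using r by linarith
  hence "real_of_int \<bar>S n\<bar> < real_of_int (int (d - n) + 1)" by simp
  hence "\<bar>S n\<bar> < int (d - n) + 1" by (simp only: of_int_less_iff)
  then show ?case by simp
qed

lemma seq_zero:
  fixes S :: "nat \<Rightarrow> int" and d :: nat
  assumes S0: "S 0 = 0"
    and rel: "\<And>k. k < d \<Longrightarrow> \<bar>real_of_int (S k) - (1 + 1/(real d + 1)) * real_of_int (S (Suc k))\<bar> \<le> 1"
    and k: "k \<le> d"
  shows "S k = 0"
  using k
proof (induction k)
  case 0
  then show ?case using S0 by simp
next
  case (Suc n)
  hence Sn: "S n = 0" by simp
  have "\<bar>(1 + 1/(real d + 1)) * real_of_int (S (Suc n))\<bar> \<le> 1"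
    using rel[of n] Suc.prems Sn by simp
  hence "(1 + 1/(real d + 1)) * \<bar>real_of_int (S (Suc n))\<bar> \<le> 1" by (simp add: abs_mult)
  moreover have "1 + 1/(real d + 1) > 1" by simp
  ultimately have "\<bar>real_of_int (S (Suc n))\<bar> < 1"
  proof -
    assume a1: "(1 + 1/(real d + 1)) * \<bar>real_of_int (S (Suc n))\<bar> \<le> 1" and a2: "1 + 1/(real d + 1) > 1"
    show ?thesis
    proof (rule ccontr)
      assume "\<not> \<bar>real_of_int (S (Suc n))\<bar> < 1"
      hence "1 \<le> \<bar>real_of_int (S (Suc n))\<bar>" by simp
      hence "(1 + 1/(real d + 1)) * 1 \<le> (1 + 1/(real d + 1)) * \<bar>real_of_int (S (Suc n))\<bar>"
        by (rule mult_left_mono) (use a2 in simp)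
      hence "(1 + 1/(real d + 1)) \<le> (1 + 1/(real d + 1)) * \<bar>real_of_int (S (Suc n))\<bar>" by simp
      with a1 a2 show False by linarith
    qed
  qed
  then show ?case by linarith
qed
lemma bij_lt: "bij_betw \<iota> (UNIV::'n set) {0..<(d::nat)} \<Longrightarrow> \<iota> j < d"
  using bij_betw_apply[of \<iota> UNIV "{0..<d}" j] by simp

lemma bij_ex: assumes "bij_betw \<iota> (UNIV::'n set) {0..<(d::nat)}" "k < d" obtains i where "\<iota> i = k"
proof -
  have "k \<in> \<iota> ` UNIV" using bij_betw_imp_surj_on[OF assms(1)] assms(2) by auto
  then show ?thesis using that by blast
qed

lemma bij_inj': "bij_betw \<iota> (UNIV::'n set) {0..<(d::nat)} \<Longrightarrow> \<iota> a = \<iota> b \<Longrightarrow> a = b"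
  using bij_betw_imp_inj_on[of \<iota> UNIV "{0..<d}"] by (simp add: inj_def)

definition sfx :: "('n::finite \<Rightarrow> nat) \<Rightarrow> ('n \<Rightarrow> int) \<Rightarrow> nat \<Rightarrow> int" where
  "sfx \<iota> m k = (\<Sum>j\<in>{j. k \<le> \<iota> j}. m j)"

definition lam :: "nat \<Rightarrow> ('n::finite \<Rightarrow> nat) \<Rightarrow> ('n \<Rightarrow> int) \<Rightarrow> 'n \<Rightarrow> real" where
  "lam d \<iota> m i = real_of_int (m i) - real_of_int (sfx \<iota> m (Suc (\<iota> i))) / (real d + 1)"

lemma sfx_diff: "sfx \<iota> (\<lambda>j. m j - m' j) k = sfx \<iota> m k - sfx \<iota> m' k"
  unfolding sfx_def by (simp add: sum_subtractf)

lemma lam_diff: "lam d \<iota> (\<lambda>j. m j - m' j) i = lam d \<iota> m i - lam d \<iota> m' i"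
  unfolding lam_def sfx_diff by (simp add: diff_divide_distrib)

lemma sfx_big:
  assumes "bij_betw \<iota> (UNIV::'n::finite set) {0..<d}" "d \<le> k"
  shows "sfx \<iota> (m::'n \<Rightarrow> int) k = 0"
proof -
  have lt: "\<iota> j < d" for j using bij_lt[OF assms(1)] .
  have "{j. k \<le> \<iota> j} = {}" using assms(2) lt by (auto simp: not_le intro: less_le_trans)
  then show ?thesis unfolding sfx_def by simp
qed

lemma sfx_step:
  assumes "bij_betw \<iota> (UNIV::'n::finite set) {0..<d}" "\<iota> i = k"
  shows "sfx \<iota> (m::'n \<Rightarrow> int) k = m i + sfx \<iota> m (Suc k)"
proof -
  have inj: "inj \<iota>" using assms by (auto simp: bij_betw_def)
  have "{j. k \<le> \<iota> j} = insert i {j. Suc k \<le> \<iota> j}"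
  proof -
    have neq: "\<iota> x \<noteq> \<iota> i" if "x \<noteq> i" for x using inj that by (meson injD)
    show ?thesis using assms(2) neq by (fastforce simp: Suc_le_eq)
  qed
  moreover have "i \<notin> {j. Suc k \<le> \<iota> j}" using assms(2) by simp
  ultimately show ?thesis unfolding sfx_def by simp
qed

lemma sfx_upd:
  assumes "\<iota> i0 < k"
  shows "sfx \<iota> ((m::'n::finite \<Rightarrow> int)(i0 := v)) k = sfx \<iota> m k"
  unfolding sfx_def using assms by (intro sum.cong) auto

lemma lam_eq:
  assumes "bij_betw \<iota> (UNIV::'n::finite set) {0..<d}" "\<iota> i = k"
  shows "lam d \<iota> (m::'n \<Rightarrow> int) i = real_of_int (sfx \<iota> m k) - (1 + 1/(real d + 1)) * real_of_int (sfx \<iota> m (Suc k))"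
  using sfx_step[OF assms, of m] assms(2) unfolding lam_def by (simp add: algebra_simps)

lemma key:
  assumes bij: "bij_betw \<iota> (UNIV::'n::finite set) {0..<d}"
    and nz: "\<delta> \<noteq> (\<lambda>_. 0)"
    and small: "\<And>i. \<bar>lam d \<iota> \<delta> i\<bar> \<le> 1"
  shows "\<not> (int d + 1) dvd sum \<delta> UNIV"
proof
  assume dv: "(int d + 1) dvd sum \<delta> UNIV"
  define S where "S = sfx \<iota> \<delta>"
  have Sd: "S d = 0" unfolding S_def using sfx_big[OF bij] by simp
  have rel: "\<bar>real_of_int (S k) - (1 + 1/(real d + 1)) * real_of_int (S (Suc k))\<bar> \<le> 1" if kd: "k < d" for k
  proof -
    obtain i where "\<iota> i = k" by (rule bij_ex[OF bij kd])
    then show ?thesis using lam_eq[OF bij, of i k \<delta>] small[of i] unfolding S_def by simp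
  qed
  have S0: "S 0 = sum \<delta> UNIV" unfolding S_def sfx_def by simp
  have "\<bar>S 0\<bar> \<le> int d" using seq_bound[of S d 0, OF Sd rel] by simp
  have "S 0 = 0"
  proof (rule ccontr)
    assume "S 0 \<noteq> 0"
    hence "\<bar>int d + 1\<bar> \<le> \<bar>S 0\<bar>" using dv S0 by (intro dvd_imp_le_int) auto
    with \<open>\<bar>S 0\<bar> \<le> int d\<close> show False by simp
  qed
  have allz: "S k = 0" if "k \<le> d" for k using seq_zero[of S d k, OF \<open>S 0 = 0\<close> rel that] .
  have "\<delta> i = 0" for i
  proof -
    have "\<iota> i < d" using bij unfolding bij_betw_def by auto
    then show ?thesis using sfx_step[OF bij refl, of \<delta> i] allz[of "\<iota> i"] allz[of "Suc (\<iota> i)"]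
      unfolding S_def by simp
  qed
  with nz show False by auto
qed

lemma top:
  assumes bij: "bij_betw \<iota> (UNIV::'n::finite set) {0..<d}"
    and nz: "\<delta> \<noteq> (\<lambda>_. 0)"
  shows "\<exists>i. 1 \<le> \<bar>lam d \<iota> \<delta> i\<bar>"
proof -
  define A where "A = \<iota> ` {i. \<delta> i \<noteq> 0}"
  have "A \<noteq> {}" "finite A" using nz unfolding A_def by auto
  define k where "k = Max A"
  have "k \<in> A" unfolding k_def using \<open>A \<noteq> {}\<close> \<open>finite A\<close> by simp
  then obtain i where i: "\<iota> i = k" "\<delta> i \<noteq> 0" unfolding A_def by auto
  have "sfx \<iota> \<delta> (Suc k) = 0" unfolding sfx_def
  proof (rule sum.neutral, clarify)
    fix j assume "Suc k \<le> \<iota> j"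
    show "\<delta> j = 0"
    proof (rule ccontr)
      assume "\<delta> j \<noteq> 0"
      hence "\<iota> j \<in> A" unfolding A_def by auto
      hence "\<iota> j \<le> k" unfolding k_def using \<open>finite A\<close> by simp
      with \<open>Suc k \<le> \<iota> j\<close> show False by simp
    qed
  qed
  hence "lam d \<iota> \<delta> i = real_of_int (\<delta> i)" unfolding lam_def using i by simp
  moreover have "1 \<le> \<bar>\<delta> i\<bar>" using i by simp
  ultimately show ?thesis by (intro exI[of _ i]) simp
qed

lemma lam_int: "(real d + 1) * lam d \<iota> m i = real_of_int ((int d + 1) * m i - sfx \<iota> m (Suc (\<iota> i)))"
  unfolding lam_def by (simp add: field_simps)

lemma gap:
  assumes bij: "bij_betw \<iota> (UNIV::'n::finite set) {0..<d}"
    and ne: "m \<noteq> m'"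
    and dv: "(int d + 1) dvd (sum m UNIV - sum m' UNIV)"
  shows "\<exists>i. (if d = 1 then 1 else 1 / (real d + 1)) \<le> \<bar>lam d \<iota> m i - lam d \<iota> m' i\<bar> - 1"
proof -
  define \<delta> where "\<delta> = (\<lambda>j. m j - m' j)"
  have nz: "\<delta> \<noteq> (\<lambda>_. 0)" using ne unfolding \<delta>_def by (auto simp: fun_eq_iff)
  have "sum \<delta> UNIV = sum m UNIV - sum m' UNIV" unfolding \<delta>_def by (simp add: sum_subtractf)
  hence "\<not> (\<forall>i. \<bar>lam d \<iota> \<delta> i\<bar> \<le> 1)" using key[OF bij nz] dv by auto
  then obtain i where big: "1 < \<bar>lam d \<iota> \<delta> i\<bar>" by (meson not_le)
  have ld: "lam d \<iota> \<delta> i = lam d \<iota> m i - lam d \<iota> m' i" unfolding \<delta>_def by (rule lam_diff)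
  show ?thesis
  proof (cases "d = 1")
    case True
    have "\<iota> i < d" using bij unfolding bij_betw_def by auto
    hence "sfx \<iota> \<delta> (Suc (\<iota> i)) = 0" using True sfx_big[OF bij] by simp
    hence "lam d \<iota> \<delta> i = real_of_int (\<delta> i)" unfolding lam_def by simp
    hence "1 < \<bar>\<delta> i\<bar>" using big by linarith
    hence "2 \<le> \<bar>\<delta> i\<bar>" by simp
    hence "2 \<le> \<bar>lam d \<iota> \<delta> i\<bar>" using \<open>lam d \<iota> \<delta> i = real_of_int (\<delta> i)\<close> by linarith
    then show ?thesis using True ld by (intro exI[of _ i]) simp
  next
    case False
    define z where "z = (int d + 1) * \<delta> i - sfx \<iota> \<delta> (Suc (\<iota> i))"
    have zi: "(real d + 1) * lam d \<iota> \<delta> i = real_of_int z" unfolding z_def by (rule lam_int)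
    have pos: "(0::real) < real d + 1" by simp
    have "real d + 1 < \<bar>(real d + 1) * lam d \<iota> \<delta> i\<bar>"
      using big pos by (simp add: abs_mult)
    hence "real_of_int (int d + 1) < real_of_int \<bar>z\<bar>" using zi by simp
    hence "int d + 1 < \<bar>z\<bar>" by (simp only: of_int_less_iff)
    hence "int d + 2 \<le> \<bar>z\<bar>" by simp
    hence "real_of_int (int d + 2) \<le> real_of_int \<bar>z\<bar>" by (simp only: of_int_le_iff)
    hence "real d + 2 \<le> \<bar>(real d + 1) * lam d \<iota> \<delta> i\<bar>" using zi by simp
    hence "real d + 2 \<le> (real d + 1) * \<bar>lam d \<iota> \<delta> i\<bar>" using pos by (simp add: abs_mult)
    hence "(real d + 2) / (real d + 1) \<le> \<bar>lam d \<iota> \<delta> i\<bar>" using pos by (simp add: divide_le_eq mult.commute)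
    moreover have "(real d + 2) / (real d + 1) = 1 + 1 / (real d + 1)" using pos by (simp add: field_simps)
    ultimately show ?thesis using False ld by (intro exI[of _ i]) simp
  qed
qed
definition crn :: "nat \<Rightarrow> ('n::finite \<Rightarrow> nat) \<Rightarrow> ('n \<Rightarrow> int) \<Rightarrow> real^'n" where
  "crn d \<iota> m = (\<chi> i. lam d \<iota> m i)"

definition tile :: "nat \<Rightarrow> ('n::finite \<Rightarrow> nat) \<Rightarrow> ('n \<Rightarrow> int) \<Rightarrow> (real^'n) set" where
  "tile d \<iota> m = cbox (crn d \<iota> m) (crn d \<iota> m + vec 1)"

lemma mem_tile: "x \<in> tile d \<iota> m \<longleftrightarrow> (\<forall>i. lam d \<iota> m i \<le> x$i \<and> x$i \<le> lam d \<iota> m i + 1)"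
  by (simp add: tile_def crn_def mem_box_cart)

lemma tile_inj:
  assumes bij: "bij_betw \<iota> (UNIV::'n::finite set) {0..<d}"
    and eq: "tile d \<iota> m = tile d \<iota> m'"
  shows "m = m'"
proof (rule ccontr)
  assume "m \<noteq> m'"
  hence nz: "(\<lambda>j. m j - m' j) \<noteq> (\<lambda>_. 0)" by (auto simp: fun_eq_iff)
  obtain i where "1 \<le> \<bar>lam d \<iota> (\<lambda>j. m j - m' j) i\<bar>" using top[OF bij nz] by blast
  hence i: "1 \<le> \<bar>lam d \<iota> m i - lam d \<iota> m' i\<bar>" by (simp only: lam_diff)
  have "crn d \<iota> m \<in> tile d \<iota> m" "crn d \<iota> m + vec 1 \<in> tile d \<iota> m"
    by (auto simp: mem_tile crn_def)
  hence "crn d \<iota> m \<in> tile d \<iota> m'" "crn d \<iota> m + vec 1 \<in> tile d \<iota> m'" using eq by auto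
  hence "lam d \<iota> m' i \<le> lam d \<iota> m i" "lam d \<iota> m i + 1 \<le> lam d \<iota> m' i + 1"
    unfolding mem_tile crn_def by auto
  with i show False by linarith
qed

lemma cover_aux:
  assumes bij: "bij_betw \<iota> (UNIV::'n::finite set) {0..<d}"
    and k: "k \<le> d"
  shows "\<exists>m. \<forall>i. k \<le> \<iota> i \<longrightarrow> lam d \<iota> m i \<le> (x::real^'n)$i \<and> x$i \<le> lam d \<iota> m i + 1"
  using k
proof (induction k rule: inc_induct)
  case base
  have "\<iota> i < d" for i using bij_lt[OF bij] .
  then show ?case by (auto simp: not_le[symmetric])
next
  case (step n)
  then obtain m where m: "\<And>i. Suc n \<le> \<iota> i \<Longrightarrow> lam d \<iota> m i \<le> x$i \<and> x$i \<le> lam d \<iota> m i + 1" by blast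
  obtain i0 where i0: "\<iota> i0 = n" by (rule bij_ex[OF bij step.hyps(2)])
  define s where "s = real_of_int (sfx \<iota> m (Suc n)) / (real d + 1)"
  define m' where "m' = m(i0 := \<lfloor>x$i0 + s\<rfloor>)"
  have sf: "sfx \<iota> m' k = sfx \<iota> m k" if "n < k" for k
    unfolding m'_def using sfx_upd[of \<iota> i0 k m] i0 that by simp
  show ?case
  proof (intro exI allI impI)
    fix i assume ni: "n \<le> \<iota> i"
    show "lam d \<iota> m' i \<le> x$i \<and> x$i \<le> lam d \<iota> m' i + 1"
    proof (cases "i = i0")
      case True
      have "lam d \<iota> m' i = real_of_int \<lfloor>x$i0 + s\<rfloor> - s"
        unfolding lam_def using True i0 sf[of "Suc n"] by (simp add: m'_def s_def)
      moreover have "real_of_int \<lfloor>x$i0 + s\<rfloor> \<le> x$i0 + s" by (rule of_int_floor_le)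
      moreover have "x$i0 + s < real_of_int \<lfloor>x$i0 + s\<rfloor> + 1" by (rule real_of_int_floor_add_one_gt)
      moreover have "x$i = x$i0" using True by simp
      ultimately show ?thesis by linarith
    next
      case False
      hence "\<iota> i \<noteq> n" using i0 bij_inj'[OF bij, of i i0] by auto
      hence "Suc n \<le> \<iota> i" using ni by simp
      moreover have "lam d \<iota> m' i = lam d \<iota> m i"
        unfolding lam_def using False sf[of "Suc (\<iota> i)"] ni by (simp add: m'_def)
      ultimately show ?thesis using m by simp
    qed
  qed
qed

lemma cover:
  assumes bij: "bij_betw \<iota> (UNIV::'n::finite set) {0..<d}"
  shows "\<exists>m. x \<in> tile d \<iota> m"
  using cover_aux[OF bij, of 0 x] by (auto simp: mem_tile)

lemma inter:
  assumes bij: "bij_betw \<iota> (UNIV::'n::finite set) {0..<d}"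
    and ne: "m \<noteq> m'"
  shows "tile d \<iota> m \<inter> tile d \<iota> m' \<subseteq> frontier (tile d \<iota> m) \<inter> frontier (tile d \<iota> m')"
proof
  fix x assume x: "x \<in> tile d \<iota> m \<inter> tile d \<iota> m'"
  have nz: "(\<lambda>j. m j - m' j) \<noteq> (\<lambda>_. 0)" using ne by (auto simp: fun_eq_iff)
  obtain i where "1 \<le> \<bar>lam d \<iota> (\<lambda>j. m j - m' j) i\<bar>" using top[OF bij nz] by blast
  hence i: "1 \<le> \<bar>lam d \<iota> m i - lam d \<iota> m' i\<bar>" by (simp only: lam_diff)
  have a: "lam d \<iota> m i \<le> x$i" "x$i \<le> lam d \<iota> m i + 1" "lam d \<iota> m' i \<le> x$i" "x$i \<le> lam d \<iota> m' i + 1"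
  proof -
    have "x \<in> tile d \<iota> m" "x \<in> tile d \<iota> m'" using x by auto
    then show "lam d \<iota> m i \<le> x$i" "x$i \<le> lam d \<iota> m i + 1" "lam d \<iota> m' i \<le> x$i" "x$i \<le> lam d \<iota> m' i + 1"
      unfolding mem_tile by auto
  qed
  have "x \<notin> box (crn d \<iota> m) (crn d \<iota> m + vec 1)"
    unfolding mem_box_cart crn_def using a i by (auto intro!: exI[of _ i])
  moreover have "x \<notin> box (crn d \<iota> m') (crn d \<iota> m' + vec 1)"
    unfolding mem_box_cart crn_def using a i by (auto intro!: exI[of _ i])
  ultimately show "x \<in> frontier (tile d \<iota> m) \<inter> frontier (tile d \<iota> m')"
    using x unfolding tile_def frontier_cbox by auto
qed
lemma locfin:
  assumes bij: "bij_betw \<iota> (UNIV::'n::finite set) {0..<d}"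
  shows "finite {T \<in> range (tile d \<iota>). T \<inter> ball (x::real^'n) 1 \<noteq> {}}"
proof -
  define B where "B = \<lceil>(real d + 1) * (norm x + 2)\<rceil>"
  define Z where "Z = (PiE UNIV (\<lambda>_. {-B..B}) :: ('n \<Rightarrow> int) set)"
  define f where "f z = cbox (\<chi> i. real_of_int (z i) / (real d + 1)) ((\<chi> i. real_of_int (z i) / (real d + 1)) + vec 1)"
    for z :: "'n \<Rightarrow> int"
  have fin: "finite Z" by (simp add: Z_def finite_PiE)
  have "{T \<in> range (tile d \<iota>). T \<inter> ball x 1 \<noteq> {}} \<subseteq> f ` Z"
  proof
    fix T assume T: "T \<in> {T \<in> range (tile d \<iota>). T \<inter> ball x 1 \<noteq> {}}"
    then obtain m where Tm: "T = tile d \<iota> m" by auto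
    with T obtain y where y: "y \<in> tile d \<iota> m" "dist x y < 1" by auto
    define z where "z i = (int d + 1) * m i - sfx \<iota> m (Suc (\<iota> i))" for i
    have pos: "(0::real) < real d + 1" by simp
    have lz: "lam d \<iota> m i = real_of_int (z i) / (real d + 1)" for i
      using lam_int[of d \<iota> m i] pos unfolding z_def by (simp add: eq_divide_eq mult.commute)
    have "crn d \<iota> m = (\<chi> i. real_of_int (z i) / (real d + 1))" by (simp add: crn_def lz vec_eq_iff)
    hence "T = f z" by (simp add: Tm tile_def f_def)
    moreover have "z \<in> Z"
    proof -
      have "z i \<in> {-B..B}" for i
      proof -
        have "\<bar>x$i - y$i\<bar> \<le> dist x y"
          using component_le_norm_cart[of "x - y" i] by (simp add: dist_norm)
        moreover have "\<bar>x$i\<bar> \<le> norm x" using component_le_norm_cart[of x i] by simp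
        moreover have "lam d \<iota> m i \<le> y$i" "y$i \<le> lam d \<iota> m i + 1" using y(1) unfolding mem_tile by auto
        ultimately have l: "\<bar>lam d \<iota> m i\<bar> \<le> norm x + 2" using y(2) by linarith
        have "\<bar>real_of_int (z i)\<bar> = (real d + 1) * \<bar>lam d \<iota> m i\<bar>" using lz pos by (simp add: abs_mult)
        also have "\<dots> \<le> (real d + 1) * (norm x + 2)" using l pos by (intro mult_left_mono) auto
        also have "\<dots> \<le> real_of_int B" unfolding B_def by (rule le_of_int_ceiling)
        finally have "real_of_int \<bar>z i\<bar> \<le> real_of_int B" by simp
        hence "\<bar>z i\<bar> \<le> B" by (simp only: of_int_le_iff)
        then show ?thesis by (simp add: abs_le_iff)
      qed
      then show ?thesis unfolding Z_def by (simp add: PiE_UNIV_domain)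
    qed
    ultimately show "T \<in> f ` Z" by auto
  qed
  then show ?thesis using fin by (meson finite_surj)
qed

lemma meas: "emeasure lebesgue (tile d \<iota> m) = 1"
proof -
  have "tile d \<iota> m \<in> sets lborel" unfolding tile_def by simp
  hence "emeasure lebesgue (tile d \<iota> m) = emeasure lborel (tile d \<iota> m)" by simp
  also have "\<dots> = 1" unfolding tile_def
    apply (simp add: emeasure_lborel_cbox_eq Basis_vec_def)
    apply (auto simp: inner_axis intro!: prod.neutral)
    done
  finally show ?thesis .
qed

lemma c_le:
  assumes "1 \<le> d"
  shows "1 / (1 + 2 * (real d - 1) * sqrt 2) \<le> (if d = 1 then 1 else 1 / (real d + 1))"
proof (cases "d = 1")
  case True then show ?thesis by simp
next
  case False
  hence d2: "2 \<le> real d" using assms by simp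
  have "1 \<le> sqrt 2" by simp
  hence "2 * (real d - 1) * 1 \<le> 2 * (real d - 1) * sqrt 2" using d2 by (intro mult_left_mono) auto
  hence "2 * (real d - 1) \<le> 2 * (real d - 1) * sqrt 2" by simp
  define s where "s = 2 * (real d - 1) * sqrt 2"
  have "2 * (real d - 1) \<le> s" unfolding s_def by fact
  then have "real d + 1 \<le> 1 + s" using d2 by argo
  hence "real d + 1 \<le> 1 + 2 * (real d - 1) * sqrt 2" unfolding s_def .
  hence "1 / (1 + 2 * (real d - 1) * sqrt 2) \<le> 1 / (real d + 1)"
    by (intro divide_left_mono) auto
  then show ?thesis using False by simp
qed
theorem mainTheorem12:
  fixes d :: nat
  assumes "d = CARD('n::finite)"
  shows "\<exists>(\<T> :: (real ^ 'n) set set) col.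
           colored_tiling (d + 1) \<T> col \<and>
           (\<forall>T\<in>\<T>. emeasure lebesgue T \<le> 1) \<and>
           min_distance \<T> col \<ge> ereal (1 / (1 + 2 * (real d - 1) * sqrt 2))"
proof -
  obtain \<iota> :: "'n \<Rightarrow> nat" where bij: "bij_betw \<iota> UNIV {0..<d}"
    using ex_bij_betw_finite_nat[of "UNIV :: 'n set"] assms by auto
  have d1: "1 \<le> d" using assms by simp
  define \<T> where "\<T> = range (tile d \<iota>)"
  define col where "col T = nat (sum (SOME m. T = tile d \<iota> m) UNIV mod (int d + 1))" for T
  have colm: "col (tile d \<iota> m) = nat (sum m UNIV mod (int d + 1))" for m
  proof -
    have "tile d \<iota> m = tile d \<iota> (SOME m'. tile d \<iota> m = tile d \<iota> m')" using someI[of "\<lambda>m'. tile d \<iota> m = tile d \<iota> m'" m] by simp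
    hence "m = (SOME m'. tile d \<iota> m = tile d \<iota> m')" by (rule tile_inj[OF bij])
    then show ?thesis unfolding col_def by simp
  qed
  define g where "g = (if d = 1 then 1 else 1 / (real d + 1))"
  have ct: "colored_tiling (d + 1) \<T> col"
    unfolding colored_tiling_def
  proof (intro conjI)
    show "\<forall>T\<in>\<T>. closed T \<and> bounded T \<and> connected T"
      unfolding \<T>_def tile_def by (auto intro: convex_connected)
    show "\<Union> \<T> = UNIV" unfolding \<T>_def using cover[OF bij] by auto
    show "\<forall>x. \<exists>e>0. finite {T \<in> \<T>. T \<inter> ball x e \<noteq> {}}"
      unfolding \<T>_def using locfin[OF bij] by (intro allI exI[of _ 1]) auto
    show "\<forall>T\<in>\<T>. \<forall>T'\<in>\<T>. T \<noteq> T' \<longrightarrow> T \<inter> T' \<subseteq> frontier T \<inter> frontier T'"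
    proof (intro ballI impI)
      fix T T' assume "T \<in> \<T>" "T' \<in> \<T>" "T \<noteq> T'"
      then obtain m m' where "T = tile d \<iota> m" "T' = tile d \<iota> m'" "m \<noteq> m'" unfolding \<T>_def by auto
      then show "T \<inter> T' \<subseteq> frontier T \<inter> frontier T'" using inter[OF bij] by simp
    qed
    show "\<forall>T\<in>\<T>. col T < d + 1"
    proof
      fix T assume "T \<in> \<T>"
      then obtain m where "T = tile d \<iota> m" unfolding \<T>_def by auto
      moreover have "0 \<le> sum m UNIV mod (int d + 1)" "sum m UNIV mod (int d + 1) < int d + 1"
        by (rule pos_mod_sign, simp) (rule pos_mod_bound, simp)
      ultimately show "col T < d + 1" using colm by (simp add: nat_less_iff)
    qed
  qed
  have ms: "\<forall>T\<in>\<T>. emeasure lebesgue T \<le> 1" unfolding \<T>_def by (simp add: meas)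
  have md: "ereal (1 / (1 + 2 * (real d - 1) * sqrt 2)) \<le> min_distance \<T> col"
    unfolding min_distance_def
  proof (rule INF_greatest, clarify)
    fix x y T T' assume T: "T \<in> \<T>" and T': "T' \<in> \<T>" and ne: "T \<noteq> T'" and cc: "col T = col T'"
      and x: "x \<in> T" and y: "y \<in> T'"
    obtain m where m: "T = tile d \<iota> m" using T unfolding \<T>_def by auto
    obtain m' where m': "T' = tile d \<iota> m'" using T' unfolding \<T>_def by auto
    have mne: "m \<noteq> m'" using ne m m' by auto
    have "nat (sum m UNIV mod (int d + 1)) = nat (sum m' UNIV mod (int d + 1))"
      using cc m m' colm by simp
    moreover have "0 \<le> sum m UNIV mod (int d + 1)" "0 \<le> sum m' UNIV mod (int d + 1)"
      by (rule pos_mod_sign, simp)+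
    ultimately have "sum m UNIV mod (int d + 1) = sum m' UNIV mod (int d + 1)" by (metis eq_nat_nat_iff)
    hence dv: "(int d + 1) dvd (sum m UNIV - sum m' UNIV)" by (simp add: mod_eq_dvd_iff)
    obtain i where i: "g \<le> \<bar>lam d \<iota> m i - lam d \<iota> m' i\<bar> - 1"
      using gap[OF bij mne dv] unfolding g_def by blast
    have a: "lam d \<iota> m i \<le> x$i" "x$i \<le> lam d \<iota> m i + 1" "lam d \<iota> m' i \<le> y$i" "y$i \<le> lam d \<iota> m' i + 1"
    proof -
      have "x \<in> tile d \<iota> m" "y \<in> tile d \<iota> m'" using x y m m' by auto
      then show "lam d \<iota> m i \<le> x$i" "x$i \<le> lam d \<iota> m i + 1" "lam d \<iota> m' i \<le> y$i" "y$i \<le> lam d \<iota> m' i + 1"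
        unfolding mem_tile by auto
    qed
    have "\<bar>x$i - y$i\<bar> \<le> dist x y"
      using component_le_norm_cart[of "x - y" i] by (simp add: dist_norm)
    moreover have "g \<le> \<bar>x$i - y$i\<bar>" using a i by linarith
    moreover have "1 / (1 + 2 * (real d - 1) * sqrt 2) \<le> g" unfolding g_def by (rule c_le[OF d1])
    ultimately show "ereal (1 / (1 + 2 * (real d - 1) * sqrt 2)) \<le> ereal (dist (fst (x, y)) (snd (x, y)))"
      by simp
  qed
  show ?thesis using ct ms md by blast
qed

end
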